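(* Let $0\le a\le b$ and let $Q$ be a path linkage with four edges $e_1,e_2,e_3,e_4$ (in this order along the path) of lengths $l(e_1)=\frac{a+b}{2}$ and $l(e_2)=l(e_3)=l(e_4)=\frac{b-a}{6}$. Then $[Q]=[a,b]$ and $\nabla(Q)=[a,b]$.
   Context: A path linkage is a linkage $P=(G,l)$ where $G$ is a path graph with vertices $1,\dots,k+1$ and edges $\{i,i+1\}$; its terminal vertices are $s=1$, $t=k+1$. $C(P)=\{p:V\to\mathbb R^2:|p(u)-p(v)|=l(\{u,v\})\text{ for every edge}\}$, $M(P)$ is the quotient of $C(P)$ by the group of orientation preserving isometries of $\mathbb R^2$, $\theta:M(P)\to\mathbb R$, $\theta(p)=|p(s)-p(t)|$, $[P]=\theta(M(P))$, and $\nabla(P)=\{x\in[P]:\theta^{-1}(x)\text{ is connected}\}$. *)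

theory Defs
  imports "HOL-Analysis.Analysis"
begin

text \<open>Path linkage with k edges: vertices 1..k+1, edge i = {i, i+1} (1 <= i <= k) of length l i.
  The plane R^2 is identified with the complex numbers.\<close>

definition cspace_top :: "nat \<Rightarrow> (nat \<Rightarrow> complex) topology" where
  "cspace_top k = product_topology (\<lambda>_. euclidean) {1..Suc k}"

definition conf :: "nat \<Rightarrow> (nat \<Rightarrow> real) \<Rightarrow> (nat \<Rightarrow> complex) set" where
  "conf k l = {p \<in> topspace (cspace_top k). \<forall>i\<in>{1..k}. cmod (p i - p (Suc i)) = l i}"

definition or_isom :: "(complex \<Rightarrow> complex) set" where
  "or_isom = {g. \<exists>u c. cmod u = 1 \<and> (\<forall>z. g z = u * z + c)}"

definition congr_rel :: "nat \<Rightarrow> (nat \<Rightarrow> real) \<Rightarrow> ((nat \<Rightarrow> complex) \<times> (nat \<Rightarrow> complex)) set" where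
  "congr_rel k l = {(p, q). p \<in> conf k l \<and> q \<in> conf k l \<and>
      (\<exists>g\<in>or_isom. \<forall>i\<in>{1..Suc k}. q i = g (p i))}"

definition moduli :: "nat \<Rightarrow> (nat \<Rightarrow> real) \<Rightarrow> (nat \<Rightarrow> complex) set set" where
  "moduli k l = conf k l // congr_rel k l"

definition moduli_top :: "nat \<Rightarrow> (nat \<Rightarrow> real) \<Rightarrow> (nat \<Rightarrow> complex) set topology" where
  "moduli_top k l = topology (\<lambda>U. U \<subseteq> moduli k l \<and>
      openin (subtopology (cspace_top k) (conf k l)) (\<Union>U))"

definition theta :: "nat \<Rightarrow> (nat \<Rightarrow> complex) set \<Rightarrow> real" where
  "theta k X = cmod ((SOME p. p \<in> X) 1 - (SOME p. p \<in> X) (Suc k))"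

definition reach :: "nat \<Rightarrow> (nat \<Rightarrow> real) \<Rightarrow> real set" where
  "reach k l = theta k ` moduli k l"

definition nabla :: "nat \<Rightarrow> (nat \<Rightarrow> real) \<Rightarrow> real set" where
  "nabla k l = {x \<in> reach k l. connectedin (moduli_top k l) {X \<in> moduli k l. theta k X = x}}"

end

theory Submission
  imports Defs
begin


lemma congr_rel_alt:
  "congr_rel k l = {(p, q). p \<in> conf k l \<and> q \<in> conf k l \<and>
      (\<exists>u c. cmod u = 1 \<and> (\<forall>i\<in>{1..Suc k}. q i = u * p i + c))}"
proof (intro set_eqI iffI)
  fix z assume "z \<in> congr_rel k l"
  then show "z \<in> {(p, q). p \<in> conf k l \<and> q \<in> conf k l \<and>
      (\<exists>u c. cmod u = 1 \<and> (\<forall>i\<in>{1..Suc k}. q i = u * p i + c))}"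
    unfolding congr_rel_def or_isom_def by fastforce
next
  fix z assume "z \<in> {(p, q). p \<in> conf k l \<and> q \<in> conf k l \<and>
      (\<exists>u c. cmod u = 1 \<and> (\<forall>i\<in>{1..Suc k}. q i = u * p i + c))}"
  then obtain p q u c where "z = (p,q)" "p \<in> conf k l" "q \<in> conf k l" "cmod u = 1"
     "\<forall>i\<in>{1..Suc k}. q i = u * p i + c" by blast
  then show "z \<in> congr_rel k l"
  proof -
    have "(\<lambda>z. u * z + c) \<in> or_isom" unfolding or_isom_def using \<open>cmod u = 1\<close> by auto
    then show ?thesis unfolding congr_rel_def using \<open>z = (p,q)\<close> \<open>p \<in> conf k l\<close> \<open>q \<in> conf k l\<close>
      \<open>\<forall>i\<in>{1..Suc k}. q i = u * p i + c\<close> by auto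
  qed
qed

lemma congrI: "p \<in> conf k l \<Longrightarrow> q \<in> conf k l \<Longrightarrow> cmod u = 1 \<Longrightarrow>
   (\<And>i. i \<in> {1..Suc k} \<Longrightarrow> q i = u * p i + c) \<Longrightarrow> (p, q) \<in> congr_rel k l"
  unfolding congr_rel_alt by blast

lemma congrE: "(p, q) \<in> congr_rel k l \<Longrightarrow> (\<And>u c. p \<in> conf k l \<Longrightarrow> q \<in> conf k l \<Longrightarrow> cmod u = 1 \<Longrightarrow>
   (\<And>i. i \<in> {1..Suc k} \<Longrightarrow> q i = u * p i + c) \<Longrightarrow> P) \<Longrightarrow> P"
  unfolding congr_rel_alt by blast

lemma equiv_congr: "equiv (conf k l) (congr_rel k l)"
proof (rule equivI)
  show "congr_rel k l \<subseteq> conf k l \<times> conf k l" unfolding congr_rel_alt by auto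
  show "refl_on (conf k l) (congr_rel k l)"
  proof (unfold refl_on_def, intro ballI)
    fix p assume "p \<in> conf k l"
    then show "(p, p) \<in> congr_rel k l" by (intro congrI[where u=1 and c=0]) auto
  qed
  show "sym (congr_rel k l)"
  proof (rule symI)
    fix p q assume "(p, q) \<in> congr_rel k l"
    then obtain u c where pq: "p \<in> conf k l" "q \<in> conf k l" "cmod u = 1"
        "\<And>i. i \<in> {1..Suc k} \<Longrightarrow> q i = u * p i + c" by (elim congrE) blast
    have u0: "u \<noteq> 0" using pq(3) by auto
    have cu: "cmod (1/u) = 1" using pq(3) by (simp add: norm_divide)
    show "(q, p) \<in> congr_rel k l"
    proof (rule congrI[OF pq(2) pq(1) cu])
      fix i assume "i \<in> {1..Suc k}"
      then have "q i = u * p i + c" by (rule pq(4))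
      then show "p i = (1/u) * q i + (- c / u)" using u0 by (simp add: field_simps)
    qed
  qed
  show "trans (congr_rel k l)"
  proof (rule transI)
    fix p q r assume A: "(p, q) \<in> congr_rel k l" and B: "(q, r) \<in> congr_rel k l"
    obtain u c where pq: "p \<in> conf k l" "cmod u = 1"
        "\<And>i. i \<in> {1..Suc k} \<Longrightarrow> q i = u * p i + c" using A by (elim congrE) blast
    obtain v d where qr: "r \<in> conf k l" "cmod v = 1"
        "\<And>i. i \<in> {1..Suc k} \<Longrightarrow> r i = v * q i + d" using B by (elim congrE) blast
    have cu: "cmod (v * u) = 1" using pq qr by (simp add: norm_mult)
    show "(p, r) \<in> congr_rel k l"
    proof (rule congrI[OF pq(1) qr(1) cu])
      fix i assume "i \<in> {1..Suc k}"
      then show "r i = (v * u) * p i + (v * c + d)" using pq(3) qr(3) by (simp add: algebra_simps)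
    qed
  qed
qed

lemma istop_moduli: "istopology (\<lambda>U. U \<subseteq> moduli k l \<and>
      openin (subtopology (cspace_top k) (conf k l)) (\<Union>U))"
proof -
  have A: "\<And>S T. S \<subseteq> moduli k l \<and> openin (subtopology (cspace_top k) (conf k l)) (\<Union> S) \<Longrightarrow>
     T \<subseteq> moduli k l \<and> openin (subtopology (cspace_top k) (conf k l)) (\<Union> T) \<Longrightarrow>
     S \<inter> T \<subseteq> moduli k l \<and> openin (subtopology (cspace_top k) (conf k l)) (\<Union> (S \<inter> T))"
  proof -
  fix S T assume S: "S \<subseteq> moduli k l \<and> openin (subtopology (cspace_top k) (conf k l)) (\<Union> S)"
    and T: "T \<subseteq> moduli k l \<and> openin (subtopology (cspace_top k) (conf k l)) (\<Union> T)"
  have "\<Union>(S \<inter> T) = \<Union>S \<inter> \<Union>T"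
  proof
    show "\<Union>S \<inter> \<Union>T \<subseteq> \<Union>(S \<inter> T)"
    proof
      fix x assume "x \<in> \<Union>S \<inter> \<Union>T"
      then obtain X Y where "X \<in> S" "Y \<in> T" "x \<in> X" "x \<in> Y" by auto
      moreover have "X = Y \<or> X \<inter> Y = {}"
        using quotient_disj[OF equiv_congr] S T \<open>X \<in> S\<close> \<open>Y \<in> T\<close>
        unfolding moduli_def by blast
      ultimately show "x \<in> \<Union>(S \<inter> T)" by auto
    qed
  qed auto
  then show "S \<inter> T \<subseteq> moduli k l \<and> openin (subtopology (cspace_top k) (conf k l)) (\<Union> (S \<inter> T))"
    using S T by auto
  qed
  have B: "\<And>K. \<forall>U\<in>K. U \<subseteq> moduli k l \<and> openin (subtopology (cspace_top k) (conf k l)) (\<Union> U) \<Longrightarrow>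
    \<Union>K \<subseteq> moduli k l \<and> openin (subtopology (cspace_top k) (conf k l)) (\<Union> (\<Union> K))"
  proof -
  fix K assume K: "\<forall>U\<in>K. U \<subseteq> moduli k l \<and> openin (subtopology (cspace_top k) (conf k l)) (\<Union> U)"
  have "\<Union>(\<Union>K) = \<Union>(Union ` K)" by auto
  then show "\<Union>K \<subseteq> moduli k l \<and> openin (subtopology (cspace_top k) (conf k l)) (\<Union> (\<Union> K))"
    using K by auto
  qed
  show ?thesis unfolding istopology_def using A B by blast
qed

lemma openin_moduli: "openin (moduli_top k l) U \<longleftrightarrow> U \<subseteq> moduli k l \<and>
      openin (subtopology (cspace_top k) (conf k l)) (\<Union>U)"
  unfolding moduli_top_def using istop_moduli by simp

lemma conf_sub: "conf k l \<subseteq> topspace (cspace_top k)"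
  unfolding conf_def by auto

lemma topspace_moduli: "topspace (moduli_top k l) = moduli k l"
proof -
  have "openin (moduli_top k l) (moduli k l)"
    unfolding openin_moduli moduli_def
    using Union_quotient[OF equiv_congr] conf_sub
    by (simp add: openin_subtopology_refl inf.absorb2)
  then have "moduli k l \<subseteq> topspace (moduli_top k l)" by (rule openin_subset)
  moreover have "topspace (moduli_top k l) \<subseteq> moduli k l"
    using openin_moduli[of k l "topspace (moduli_top k l)"] by auto
  ultimately show ?thesis by auto
qed

definition proj :: "nat \<Rightarrow> (nat \<Rightarrow> real) \<Rightarrow> (nat \<Rightarrow> complex) \<Rightarrow> (nat \<Rightarrow> complex) set" where
  "proj k l p = congr_rel k l `` {p}"

lemma proj_in: "p \<in> conf k l \<Longrightarrow> proj k l p \<in> moduli k l"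
  unfolding proj_def moduli_def by (rule quotientI)

lemma proj_self: "p \<in> conf k l \<Longrightarrow> p \<in> proj k l p"
  unfolding proj_def using equiv_class_self[OF equiv_congr] by auto

lemma proj_eq: "(p, q) \<in> congr_rel k l \<Longrightarrow> proj k l p = proj k l q"
  unfolding proj_def using equiv_class_eq[OF equiv_congr] by auto

lemma moduli_proj: "X \<in> moduli k l \<Longrightarrow> \<exists>p\<in>conf k l. X = proj k l p"
  unfolding moduli_def proj_def by (auto elim!: quotientE)

lemma mem_proj: "X \<in> moduli k l \<Longrightarrow> p \<in> X \<Longrightarrow> X = proj k l p"
proof -
  assume X: "X \<in> moduli k l" and p: "p \<in> X"
  then obtain q where q: "q \<in> conf k l" "X = proj k l q" using moduli_proj by blast
  then have "(q, p) \<in> congr_rel k l" using p unfolding proj_def by auto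
  then show ?thesis using q proj_eq by auto
qed

lemma proj_cont: "continuous_map (subtopology (cspace_top k) (conf k l)) (moduli_top k l) (proj k l)"
  unfolding continuous_map_def
proof (intro conjI allI impI)
  have ts: "topspace (subtopology (cspace_top k) (conf k l)) = conf k l"
    using conf_sub by auto
  show "proj k l \<in> topspace (subtopology (cspace_top k) (conf k l)) \<rightarrow> topspace (moduli_top k l)"
    unfolding ts topspace_moduli using proj_in by auto
  fix U assume U: "openin (moduli_top k l) U"
  have "{x \<in> topspace (subtopology (cspace_top k) (conf k l)). proj k l x \<in> U} = \<Union>U"
  proof
    show "{x \<in> topspace (subtopology (cspace_top k) (conf k l)). proj k l x \<in> U} \<subseteq> \<Union>U"
      unfolding ts using proj_self by auto
    show "\<Union>U \<subseteq> {x \<in> topspace (subtopology (cspace_top k) (conf k l)). proj k l x \<in> U}"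
    proof
      fix x assume "x \<in> \<Union>U"
      then obtain X where X: "X \<in> U" "x \<in> X" by auto
      then have XM: "X \<in> moduli k l" using U openin_moduli by auto
      then have "X = proj k l x" using mem_proj X by auto
      moreover have "x \<in> conf k l" using XM X(2) unfolding moduli_def
        using Union_quotient[OF equiv_congr] by auto
      ultimately show "x \<in> {x \<in> topspace (subtopology (cspace_top k) (conf k l)). proj k l x \<in> U}"
        unfolding ts using X by auto
    qed
  qed
  then show "openin (subtopology (cspace_top k) (conf k l))
        {x \<in> topspace (subtopology (cspace_top k) (conf k l)). proj k l x \<in> U}"
    using U openin_moduli by auto
qed

lemma theta_proj: "p \<in> conf k l \<Longrightarrow> theta k (proj k l p) = cmod (p 1 - p (Suc k))"
proof -
  assume p: "p \<in> conf k l"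
  define q where "q = (SOME q. q \<in> proj k l p)"
  have "q \<in> proj k l p" unfolding q_def using proj_self[OF p] by (metis someI)
  then have "(p, q) \<in> congr_rel k l" unfolding proj_def by auto
  then obtain u c where uc: "cmod u = 1" "\<forall>i\<in>{1..Suc k}. q i = u * p i + c"
    unfolding congr_rel_alt by auto
  have "q 1 - q (Suc k) = u * (p 1 - p (Suc k))" using uc(2) by (auto simp: algebra_simps)
  then have "cmod (q 1 - q (Suc k)) = cmod (p 1 - p (Suc k))" using uc(1) by (simp add: norm_mult)
  then show ?thesis unfolding theta_def q_def by simp
qed



definition cpt :: "real \<Rightarrow> real \<Rightarrow> real \<Rightarrow> real \<Rightarrow> complex" where
  "cpt R1 R2 c e = Complex ((R1^2 + c^2 - R2^2)/(2*c))
      (e * sqrt (R1^2 - ((R1^2 + c^2 - R2^2)/(2*c))^2))"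

lemma tri_h:
  fixes c R1 R2 :: real
  assumes "c > 0" "R2 \<le> R1 + c" "R1 \<le> R2 + c" "c \<le> R1 + R2"
  shows "((R1^2 + c^2 - R2^2)/(2*c))^2 \<le> R1^2"
proof -
  have R1: "R1 \<ge> 0" "R2 \<ge> 0" using assms by linarith+
  have "(R1 - c)^2 \<le> R2^2" using assms R1 by (subst power2_le_iff_abs_le) auto
  moreover have "R2^2 \<le> (R1 + c)^2" using assms R1 by (simp add: power_mono)
  ultimately have "\<bar>R1^2 + c^2 - R2^2\<bar> \<le> 2*c*R1" by (smt (verit, ccfv_SIG) power2_diff power2_sum)
  then have "\<bar>(R1^2 + c^2 - R2^2)/(2*c)\<bar> \<le> R1" using assms(1)
    by (metis abs_div_pos mult.commute mult_2 mult_imp_div_pos_le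
    zero_less_double_add_iff_zero_less_single_add)
  then show ?thesis using R1 by (metis power2_le_iff_abs_le)
qed

lemma cpt_props:
  fixes c R1 R2 e :: real
  assumes "c > 0" "R2 \<le> R1 + c" "R1 \<le> R2 + c" "c \<le> R1 + R2" "e = 1 \<or> e = -1"
  shows "cmod (cpt R1 R2 c e) = R1" "cmod (cpt R1 R2 c e - of_real c) = R2"
proof -
  define h where "h = (R1^2 + c^2 - R2^2)/(2*c)"
  have hh: "h^2 \<le> R1^2" unfolding h_def using tri_h assms by blast
  have R1: "R1 \<ge> 0" "R2 \<ge> 0" using assms by linarith+
  have e2: "e^2 = 1" using assms(5) by auto
  have sq: "(e * sqrt (R1^2 - h^2))^2 = R1^2 - h^2" using hh e2 by (simp add: power_mult_distrib)
  have c: "cpt R1 R2 c e = Complex h (e * sqrt (R1^2 - h^2))" unfolding cpt_def h_def by simp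
  show "cmod (cpt R1 R2 c e) = R1" unfolding c cmod_def using sq R1 by simp
  have hc: "2*c*h = R1^2 + c^2 - R2^2" unfolding h_def using assms(1) by simp
  have "(h - c)^2 + (R1^2 - h^2) = R2^2" using hc by (simp add: power2_eq_square algebra_simps)
  then show "cmod (cpt R1 R2 c e - of_real c) = R2" unfolding c cmod_def using sq R1
    by (simp add: Complex_eq)
qed

lemma cpt_conv:
  fixes c R1 R2 :: real and z :: complex
  assumes "c > 0" "cmod z = R1" "cmod (z - of_real c) = R2"
  shows "\<exists>e. (e = 1 \<or> e = -1) \<and> z = cpt R1 R2 c e"
proof -
  define h where "h = (R1^2 + c^2 - R2^2)/(2*c)"
  have a: "R1^2 = (Re z)^2 + (Im z)^2" using assms(2) unfolding cmod_def
    by (metis assms(2) cmod_power2)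
  have "cmod (z - of_real c)^2 = (Re z - c)^2 + (Im z)^2" using norm_complex_def by simp
  then have b: "R2^2 = (Re z - c)^2 + (Im z)^2" using assms(3) by simp
  have "2*c*Re z = R1^2 + c^2 - R2^2" using a b by (simp add: power2_eq_square algebra_simps)
  then have re: "Re z = h" unfolding h_def using assms(1) by (simp add: field_simps)
  have im: "(Im z)^2 = R1^2 - h^2" using a re by simp
  show ?thesis
  proof (cases "Im z \<ge> 0")
    case True
    then have "Im z = 1 * sqrt (R1^2 - h^2)" using im by (simp add: real_sqrt_unique)
    then show ?thesis using re unfolding cpt_def h_def[symmetric] by (intro exI[of _ 1]) (simp add: complex_eq_iff)
  next
    case False
    have "sqrt ((Im z)^2) = - Im z" using False by simp
    then have "Im z = -1 * sqrt (R1^2 - h^2)" using im by simp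
    then show ?thesis using re unfolding cpt_def h_def[symmetric] by (intro exI[of _ "-1"]) (simp add: complex_eq_iff)
  qed
qed

lemma cpt_deg: "((R1^2 + c^2 - R2^2)/(2*c))^2 = R1^2 \<Longrightarrow> cpt R1 R2 c e = cpt R1 R2 c 1"
  unfolding cpt_def by simp



lemma idx5: "(i::nat) \<in> {1..Suc 4} \<longleftrightarrow> i = 1 \<or> i = 2 \<or> i = 3 \<or> i = 4 \<or> i = 5" by auto

lemma conf4: "p \<in> conf 4 l \<longleftrightarrow> p \<in> extensional {1..5} \<and> cmod (p 1 - p 2) = l 1 \<and>
   cmod (p 2 - p 3) = l 2 \<and> cmod (p 3 - p 4) = l 3 \<and> cmod (p 4 - p 5) = l 4"
proof -
  have t: "topspace (cspace_top 4) = extensional {1..5}"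
    unfolding cspace_top_def by (auto simp: PiE_def)
  have i4: "{1..4::nat} = {1,2,3,4}" by auto
  show ?thesis unfolding conf_def t i4 by (auto simp: numeral_eq_Suc)
qed

definition Gc :: "real \<Rightarrow> real \<Rightarrow> real \<Rightarrow> real \<Rightarrow> real \<Rightarrow> real \<Rightarrow> real \<times> real \<Rightarrow> nat \<Rightarrow> complex" where
"Gc L s x e1 e2 e3 z i = (if i = 1 then 0
   else if i = 2 then (cpt (fst z) s (snd z) e2 / of_real (fst z)) * cpt L s (fst z) e1
   else if i = 3 then cpt (fst z) s (snd z) e2
   else if i = 4 then of_real (snd z)
   else if i = 5 then cpt x s (snd z) e3 else undefined)"

definition DD :: "real \<Rightarrow> real \<Rightarrow> real \<Rightarrow> (real \<times> real) set" where
"DD L s x = {z. L - s \<le> fst z \<and> fst z \<le> L + s \<and> fst z - s \<le> snd z \<and> snd z \<le> fst z + s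
    \<and> \<bar>x - s\<bar> \<le> snd z \<and> snd z \<le> x + s}"

lemma cvx_aux: "(y1::real) \<le> z1 \<Longrightarrow> y2 \<le> z2 \<Longrightarrow> u \<ge> 0 \<Longrightarrow> v \<ge> 0 \<Longrightarrow> u * y1 + v * y2 \<le> u * z1 + v * z2"
  by (simp add: add_mono mult_left_mono)

lemma DD_convex: "convex (DD L s x)"
  unfolding convex_def
proof (intro ballI allI impI)
  fix y z :: "real \<times> real" and u v :: real
  assume y: "y \<in> DD L s x" and z: "z \<in> DD L s x" and uv: "0 \<le> u" "0 \<le> v" "u + v = 1"
  obtain r1 q1 where y': "y = (r1, q1)" by force
  obtain r2 q2 where z': "z = (r2, q2)" by force
  have A: "L - s \<le> r1" "r1 \<le> L + s" "r1 - s \<le> q1" "q1 \<le> r1 + s" "\<bar>x - s\<bar> \<le> q1" "q1 \<le> x + s"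
    using y unfolding y' DD_def by auto
  have B: "L - s \<le> r2" "r2 \<le> L + s" "r2 - s \<le> q2" "q2 \<le> r2 + s" "\<bar>x - s\<bar> \<le> q2" "q2 \<le> x + s"
    using z unfolding z' DD_def by auto
  have K: "\<And>c. u * c + v * c = c" using uv(3) by (metis distrib_right mult_1)
  have "u * (L-s) + v * (L-s) \<le> u * r1 + v * r2" by (rule cvx_aux) (use A B uv in auto)
  moreover have "u * r1 + v * r2 \<le> u * (L+s) + v * (L+s)" by (rule cvx_aux) (use A B uv in auto)
  moreover have "u * (r1-s) + v * (r2-s) \<le> u * q1 + v * q2" by (rule cvx_aux) (use A B uv in auto)
  moreover have "u * q1 + v * q2 \<le> u * (r1+s) + v * (r2+s)" by (rule cvx_aux) (use A B uv in auto)
  moreover have "u * \<bar>x - s\<bar> + v * \<bar>x - s\<bar> \<le> u * q1 + v * q2" by (rule cvx_aux) (use A B uv in auto)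
  moreover have "u * q1 + v * q2 \<le> u * (x+s) + v * (x+s)" by (rule cvx_aux) (use A B uv in auto)
  moreover have "u * (r1-s) + v * (r2-s) = u * r1 + v * r2 - s" "u * (r1+s) + v * (r2+s) = u * r1 + v * r2 + s"
    using K[of s] by (simp_all add: algebra_simps)
  ultimately show "u *\<^sub>R y + v *\<^sub>R z \<in> DD L s x"
    unfolding y' z' DD_def using K by simp
qed

lemma cont_cpt:
  assumes "continuous_on S f" "continuous_on S g" "\<forall>z\<in>S. g z \<noteq> 0"
  shows "continuous_on S (\<lambda>z. cpt (f z) R2 (g z) e)"
  unfolding cpt_def Complex_eq using assms by (intro continuous_intros) auto



lemma tri3: "cmod (a - c) \<le> cmod (a - b) + cmod (b - c)"
proof -
  have "a - c = (a - b) + (b - c)" by simp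
  then show ?thesis by (metis norm_triangle_ineq)
qed

context
  fixes L s x :: real and l :: "nat \<Rightarrow> real"
  assumes s0: "s \<ge> 0" and Ls: "3 * s \<le> L" and L0: "L > 0"
    and xlo: "L - 3 * s \<le> x" and xhi: "x \<le> L + 3 * s"
    and l1: "l 1 = L" and l2: "l 2 = s" and l3: "l 3 = s" and l4: "l 4 = s"
begin

lemma DD_pos: "z \<in> DD L s x \<Longrightarrow> fst z > 0 \<and> snd z > 0 \<and> fst z \<ge> s"
  unfolding DD_def using s0 Ls L0 by auto

lemma G_conf:
  assumes z: "z \<in> DD L s x" and e: "e1 = 1 \<or> e1 = -1" "e2 = 1 \<or> e2 = -1" "e3 = 1 \<or> e3 = -1"
  shows "Gc L s x e1 e2 e3 z \<in> conf 4 l" "cmod (Gc L s x e1 e2 e3 z 1 - Gc L s x e1 e2 e3 z 5) = x"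
proof -
  obtain r q where rq: "z = (r, q)" by force
  have D: "L - s \<le> r" "r \<le> L + s" "r - s \<le> q" "q \<le> r + s" "\<bar>x - s\<bar> \<le> q" "q \<le> x + s"
    using z unfolding rq DD_def by auto
  have pos: "r > 0" "q > 0" "r \<ge> s" using DD_pos[OF z] rq by auto
  have P5: "cmod (cpt x s q e3) = x" "cmod (cpt x s q e3 - of_real q) = s"
    using cpt_props[of q s x e3] D pos e by auto
  have P3: "cmod (cpt r s q e2) = r" "cmod (cpt r s q e2 - of_real q) = s"
    using cpt_props[of q s r e2] D pos e by auto
  have P2: "cmod (cpt L s r e1) = L" "cmod (cpt L s r e1 - of_real r) = s"
    using cpt_props[of r s L e1] D pos e by auto
  define w where "w = cpt r s q e2 / of_real r"
  have w1: "cmod w = 1" unfolding w_def using P3 pos by (simp add: norm_divide)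
  have w2: "w * of_real r = cpt r s q e2" unfolding w_def using pos by simp
  have G2: "Gc L s x e1 e2 e3 z 2 = w * cpt L s r e1" unfolding Gc_def rq w_def by simp
  have "cmod (Gc L s x e1 e2 e3 z 1 - Gc L s x e1 e2 e3 z 2) = L"
    using G2 P2 w1 by (simp add: Gc_def norm_mult norm_minus_commute)
  moreover have "cmod (Gc L s x e1 e2 e3 z 2 - Gc L s x e1 e2 e3 z 3) = s"
  proof -
    have "Gc L s x e1 e2 e3 z 2 - Gc L s x e1 e2 e3 z 3 = w * (cpt L s r e1 - of_real r)"
      using G2 w2 unfolding Gc_def rq by (simp add: algebra_simps)
    then show ?thesis using P2 w1 by (simp add: norm_mult)
  qed
  moreover have "cmod (Gc L s x e1 e2 e3 z 3 - Gc L s x e1 e2 e3 z 4) = s"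
    using P3 unfolding Gc_def rq by simp
  moreover have "cmod (Gc L s x e1 e2 e3 z 4 - Gc L s x e1 e2 e3 z 5) = s"
    using P5 unfolding Gc_def rq by (simp add: norm_minus_commute)
  moreover have "Gc L s x e1 e2 e3 z \<in> extensional {1..5}"
    unfolding Gc_def extensional_def by auto
  ultimately show "Gc L s x e1 e2 e3 z \<in> conf 4 l" unfolding conf4 using l1 l2 l3 l4 by simp
  show "cmod (Gc L s x e1 e2 e3 z 1 - Gc L s x e1 e2 e3 z 5) = x"
    using P5 unfolding Gc_def rq by simp
qed

lemma G_cont:
  assumes e: "e1 = 1 \<or> e1 = -1" "e2 = 1 \<or> e2 = -1" "e3 = 1 \<or> e3 = -1"
  shows "continuous_map (top_of_set (DD L s x)) (subtopology (cspace_top 4) (conf 4 l)) (Gc L s x e1 e2 e3)"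
proof -
  let ?D = "DD L s x"
  have ps: "\<forall>z\<in>?D. snd z \<noteq> 0" "\<forall>z\<in>?D. fst z \<noteq> 0" "\<forall>z\<in>?D. complex_of_real (fst z) \<noteq> 0"
    using DD_pos by force+
  have c3: "continuous_on ?D (\<lambda>z. cpt (fst z) s (snd z) e2)"
    by (rule cont_cpt[of ?D fst snd]) (use ps in \<open>auto intro: continuous_intros\<close>)
  have c5: "continuous_on ?D (\<lambda>z. cpt x s (snd z) e3)"
    by (rule cont_cpt[of ?D "\<lambda>_. x" snd]) (use ps in \<open>auto intro: continuous_intros\<close>)
  have c2a: "continuous_on ?D (\<lambda>z. cpt L s (fst z) e1)"
    by (rule cont_cpt[of ?D "\<lambda>_. L" fst]) (use ps in \<open>auto intro: continuous_intros\<close>)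
  have c2: "continuous_on ?D (\<lambda>z. (cpt (fst z) s (snd z) e2 / of_real (fst z)) * cpt L s (fst z) e1)"
    by (intro continuous_on_mult continuous_on_divide c3 c2a) (use ps in \<open>auto intro: continuous_intros\<close>)
  have c4: "continuous_on ?D (\<lambda>z. complex_of_real (snd z))"
    by (intro continuous_intros)
  have comp: "\<forall>k\<in>{1..Suc 4}. continuous_on ?D (\<lambda>z. Gc L s x e1 e2 e3 z k)"
  proof
    fix k :: nat assume "k \<in> {1..Suc 4}"
    then have "k = 1 \<or> k = 2 \<or> k = 3 \<or> k = 4 \<or> k = 5" by (simp only: idx5)
    then show "continuous_on ?D (\<lambda>z. Gc L s x e1 e2 e3 z k)"
      using c2 c3 c4 c5 by (auto simp: Gc_def)
  qed
  have ext: "Gc L s x e1 e2 e3 ` topspace (top_of_set ?D) \<subseteq> extensional {1..Suc 4}"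
    unfolding Gc_def extensional_def by auto
  have "continuous_map (top_of_set ?D) (cspace_top 4) (Gc L s x e1 e2 e3)"
    unfolding cspace_top_def continuous_map_componentwise using ext comp by simp
  moreover have "Gc L s x e1 e2 e3 \<in> topspace (top_of_set ?D) \<rightarrow> conf 4 l"
    using G_conf(1) e by auto
  ultimately show ?thesis by (simp add: continuous_map_in_subtopology)
qed


lemma unit_rot: "w \<noteq> 0 \<Longrightarrow> (cnj w / of_real (cmod w)) * w = of_real (cmod w)"
proof -
  assume w: "w \<noteq> 0"
  have "cnj w * w = (of_real (cmod w))^2" using complex_norm_square[of w] by (simp add: mult.commute)
  then show ?thesis using w by (simp add: power2_eq_square)
qed

lemma unit_rot_norm: "w \<noteq> 0 \<Longrightarrow> cmod (cnj w / of_real (cmod w)) = 1"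
  by (simp add: norm_divide)

lemma G_surj:
  assumes p: "p \<in> conf 4 l" and px: "cmod (p 1 - p 5) = x"
  shows "\<exists>e1 e2 e3 z. (e1 = 1 \<or> e1 = -1) \<and> (e2 = 1 \<or> e2 = -1) \<and> (e3 = 1 \<or> e3 = -1) \<and>
     z \<in> DD L s x \<and> (p, Gc L s x e1 e2 e3 z) \<in> congr_rel 4 l"
proof -
  have E: "cmod (p 1 - p 2) = L" "cmod (p 2 - p 3) = s" "cmod (p 3 - p 4) = s" "cmod (p 4 - p 5) = s"
    using p unfolding conf4 using l1 l2 l3 l4 by auto
  define r where "r = cmod (p 3 - p 1)"
  define q where "q = cmod (p 4 - p 1)"
  have t1: "r \<le> s + L" using tri3[of "p 3" "p 1" "p 2"] E unfolding r_def by (simp add: norm_minus_commute)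
  have t2: "L \<le> s + r" using tri3[of "p 2" "p 1" "p 3"] E unfolding r_def by (simp add: norm_minus_commute)
  have t3: "q \<le> s + r" using tri3[of "p 4" "p 1" "p 3"] E unfolding r_def q_def by (simp add: norm_minus_commute)
  have t4: "r \<le> s + q" using tri3[of "p 3" "p 1" "p 4"] E unfolding r_def q_def by (simp add: norm_minus_commute)
  have t5: "q \<le> s + x" using tri3[of "p 4" "p 1" "p 5"] E px unfolding q_def by (simp add: norm_minus_commute)
  have t6: "x \<le> s + q" using tri3[of "p 5" "p 1" "p 4"] E px unfolding q_def by (simp add: norm_minus_commute)
  have t7: "s \<le> q + x" using tri3[of "p 4" "p 5" "p 1"] E px unfolding q_def by (simp add: norm_minus_commute)
  define z where "z = (r, q)"
  have zD: "z \<in> DD L s x" unfolding z_def DD_def using t1 t2 t3 t4 t5 t6 t7 by auto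
  have pos: "r > 0" "q > 0" using DD_pos[OF zD] unfolding z_def by auto
  define w where "w = p 4 - p 1"
  have w0: "w \<noteq> 0" using pos unfolding q_def w_def by auto
  define u where "u = cnj w / of_real q"
  have u1: "cmod u = 1" unfolding u_def q_def w_def[symmetric] using unit_rot_norm[OF w0] .
  have uw: "u * w = of_real q" unfolding u_def q_def w_def[symmetric] using unit_rot[OF w0] .
  have u4: "u * (p 4 - p 1) = of_real q" using uw unfolding w_def .
  have f1: "cmod (u * (p 5 - p 1)) = x" using u1 px by (simp add: norm_mult norm_minus_commute)
  have f2: "cmod (u * (p 5 - p 1) - of_real q) = s"
  proof -
    have "u * (p 5 - p 1) - of_real q = u * (p 5 - p 4)" using u4 by (simp add: algebra_simps)
    then show ?thesis using u1 E by (simp add: norm_mult norm_minus_commute)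
  qed
  obtain e3 where e3: "e3 = 1 \<or> e3 = -1" "u * (p 5 - p 1) = cpt x s q e3"
    using cpt_conv[OF pos(2) f1 f2] by blast
  have f3: "cmod (u * (p 3 - p 1)) = r" using u1 unfolding r_def by (simp add: norm_mult)
  have f4: "cmod (u * (p 3 - p 1) - of_real q) = s"
  proof -
    have "u * (p 3 - p 1) - of_real q = u * (p 3 - p 4)" using u4 by (simp add: algebra_simps)
    then show ?thesis using u1 E by (simp add: norm_mult)
  qed
  obtain e2 where e2: "e2 = 1 \<or> e2 = -1" "u * (p 3 - p 1) = cpt r s q e2"
    using cpt_conv[OF pos(2) f3 f4] by blast
  define P3 where "P3 = u * (p 3 - p 1)"
  define P2 where "P2 = u * (p 2 - p 1)"
  have P3r: "cmod P3 = r" unfolding P3_def r_def using u1 by (simp add: norm_mult)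
  have P30: "P3 \<noteq> 0" using P3r pos by auto
  define v where "v = cnj P3 / of_real r"
  have v1: "cmod v = 1" unfolding v_def using unit_rot_norm[OF P30] P3r by simp
  have vP3: "v * P3 = of_real r" unfolding v_def using unit_rot[OF P30] P3r by simp
  have f5: "cmod (v * P2) = L" unfolding P2_def using v1 u1 E by (simp add: norm_mult norm_minus_commute)
  have f6: "cmod (v * P2 - of_real r) = s"
  proof -
    have "v * P2 - of_real r = v * (u * (p 2 - p 3))" using vP3 unfolding P2_def P3_def
      by (simp add: algebra_simps)
    then show ?thesis using v1 u1 E by (simp add: norm_mult)
  qed
  obtain e1 where e1: "e1 = 1 \<or> e1 = -1" "v * P2 = cpt L s r e1"
    using cpt_conv[OF pos(1) f5 f6] by blast
  have P2eq: "P2 = (P3 / of_real r) * cpt L s r e1"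
  proof -
    have n: "P3 * cnj P3 = (of_real r)^2" using complex_norm_square[of P3] P3r by simp
    have r0: "(of_real r :: complex) \<noteq> 0" using pos by simp
    have "(P3 / of_real r) * v = (P3 * cnj P3) / (of_real r)^2" unfolding v_def
      by (simp add: power2_eq_square)
    also have "\<dots> = 1" using n r0 by simp
    finally have "(P3 / of_real r) * v = 1" .
    then have "(P3 / of_real r) * (v * P2) = P2" by (metis mult.assoc mult_1)
    then show ?thesis using e1(2) by simp
  qed
  have cg: "(p, Gc L s x e1 e2 e3 z) \<in> congr_rel 4 l"
  proof (rule congrI[OF p G_conf(1)[OF zD e1(1) e2(1) e3(1)] u1, where c = "- u * p 1"])
    fix i :: nat assume "i \<in> {1..Suc 4}"
    then have i5: "i = 1 \<or> i = 2 \<or> i = 3 \<or> i = 4 \<or> i = 5" by (simp only: idx5)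
    have h1: "Gc L s x e1 e2 e3 z 1 = u * p 1 + - u * p 1" by (simp add: Gc_def)
    have h2: "Gc L s x e1 e2 e3 z 2 = u * p 2 + - u * p 1"
    proof -
      have "Gc L s x e1 e2 e3 z 2 = (P3 / of_real r) * cpt L s r e1"
        using e2(2) unfolding Gc_def z_def P3_def by simp
      also have "\<dots> = u * (p 2 - p 1)" using P2eq unfolding P2_def by simp
      finally show ?thesis by (simp add: algebra_simps)
    qed
    have h3: "Gc L s x e1 e2 e3 z 3 = u * p 3 + - u * p 1"
      using e2(2) unfolding Gc_def z_def by (simp add: algebra_simps)
    have h4: "Gc L s x e1 e2 e3 z 4 = u * p 4 + - u * p 1"
      using u4 unfolding Gc_def z_def by (simp add: algebra_simps)
    have h5: "Gc L s x e1 e2 e3 z 5 = u * p 5 + - u * p 1"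
      using e3(2) unfolding Gc_def z_def by (simp add: algebra_simps)
    show "Gc L s x e1 e2 e3 z i = u * p i + - u * p 1"
      using i5 h1 h2 h3 h4 h5 by (elim disjE) simp_all
  qed
  show ?thesis by (rule exI[of _ e1], rule exI[of _ e2], rule exI[of _ e3], rule exI[of _ z])
     (intro conjI e1(1) e2(1) e3(1) zD cg)
qed

lemma deg_lem:
  fixes R1 R2 c :: real
  assumes "c \<noteq> 0" "c = R1 + R2 \<or> c = R1 - R2"
  shows "((R1^2 + c^2 - R2^2)/(2*c))^2 = R1^2"
proof -
  have "R1^2 + c^2 - R2^2 = 2 * c * R1" using assms(2) by (auto simp: power2_eq_square algebra_simps)
  then have "(R1^2 + c^2 - R2^2)/(2*c) = R1" using assms(1) by simp
  then show ?thesis by simp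
qed

lemma Gc_deg12:
  assumes "fst z \<noteq> 0" "snd z \<noteq> 0"
    and "fst z = L + s \<or> fst z = L - s" and "snd z = fst z + s \<or> snd z = fst z - s"
  shows "Gc L s x e1 e2 e3 z = Gc L s x 1 1 e3 z"
proof -
  have a: "cpt L s (fst z) e1 = cpt L s (fst z) 1" by (rule cpt_deg, rule deg_lem) (use assms in auto)
  have b: "cpt (fst z) s (snd z) e2 = cpt (fst z) s (snd z) 1" by (rule cpt_deg, rule deg_lem) (use assms in auto)
  show ?thesis unfolding Gc_def a b ..
qed

lemma Gc_deg13:
  assumes "fst z \<noteq> 0" "snd z \<noteq> 0"
    and "fst z = L + s \<or> fst z = L - s" and "snd z = x + s \<or> snd z = x - s"
  shows "Gc L s x e1 e2 e3 z = Gc L s x 1 e2 1 z"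
proof -
  have a: "cpt L s (fst z) e1 = cpt L s (fst z) 1" by (rule cpt_deg, rule deg_lem) (use assms in auto)
  have b: "cpt x s (snd z) e3 = cpt x s (snd z) 1" by (rule cpt_deg, rule deg_lem) (use assms in auto)
  show ?thesis unfolding Gc_def a b ..
qed

lemma pts: "\<exists>P P'. P \<in> DD L s x \<and> P' \<in> DD L s x \<and>
   (fst P = L + s \<or> fst P = L - s) \<and> (snd P = fst P + s \<or> snd P = fst P - s) \<and>
   (fst P' = L + s \<or> fst P' = L - s) \<and> (snd P' = x + s \<or> snd P' = x - s)"
proof (cases "x < L - s")
  case True
  show ?thesis
    by (rule exI[of _ "(L - s, L - 2 * s)"], rule exI[of _ "(L - s, x + s)"])
       (use True s0 Ls xlo xhi in \<open>auto simp: DD_def\<close>)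
next
  case F1: False
  show ?thesis
  proof (cases "x \<le> L + s")
    case True
    show ?thesis
      by (rule exI[of _ "(L - s, L)"], rule exI[of _ "(L + s, x + s)"])
         (use True F1 s0 Ls xlo xhi in \<open>auto simp: DD_def\<close>)
  next
    case False
    show ?thesis
      by (rule exI[of _ "(L + s, L + 2 * s)"], rule exI[of _ "(L + s, x - s)"])
         (use False F1 s0 Ls xlo xhi in \<open>auto simp: DD_def\<close>)
  qed
qed

definition "CC = (\<Union>e1\<in>{1,-1}. \<Union>e2\<in>{1,-1}. \<Union>e3\<in>{1,-1::real}. Gc L s x e1 e2 e3 ` DD L s x)"

lemma img_conn:
  assumes e: "e1 = 1 \<or> e1 = -1" "e2 = 1 \<or> e2 = -1" "e3 = 1 \<or> e3 = -1"
  shows "connectedin (subtopology (cspace_top 4) (conf 4 l)) (Gc L s x e1 e2 e3 ` DD L s x)"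
proof (rule connectedin_continuous_map_image[OF G_cont[OF e]])
  show "connectedin (top_of_set (DD L s x)) (DD L s x)"
    by (simp add: connectedin_subtopology convex_connected DD_convex)
qed

lemma CC_conn: "connectedin (subtopology (cspace_top 4) (conf 4 l)) CC"
proof -
  obtain P P' where PP: "P \<in> DD L s x" "P' \<in> DD L s x"
   "fst P = L + s \<or> fst P = L - s" "snd P = fst P + s \<or> snd P = fst P - s"
   "fst P' = L + s \<or> fst P' = L - s" "snd P' = x + s \<or> snd P' = x - s"
    using pts by blast
  have pos: "fst P \<noteq> 0" "snd P \<noteq> 0" "fst P' \<noteq> 0" "snd P' \<noteq> 0"
    using DD_pos[OF PP(1)] DD_pos[OF PP(2)] by auto
  define U where "U e3 = (\<Union>e1\<in>{1,-1}. \<Union>e2\<in>{1,-1::real}. Gc L s x e1 e2 e3 ` DD L s x)" for e3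
  have Uc: "connectedin (subtopology (cspace_top 4) (conf 4 l)) (U e3)" if e3: "e3 = 1 \<or> e3 = -1" for e3
  proof -
    let ?F = "(\<lambda>(e1,e2). Gc L s x e1 e2 e3 ` DD L s x) ` ({1,-1::real} \<times> {1,-1::real})"
    have "U e3 = \<Union>?F" unfolding U_def by auto
    moreover have "connectedin (subtopology (cspace_top 4) (conf 4 l)) (\<Union>?F)"
    proof (rule connectedin_Union)
      show "\<And>S. S \<in> ?F \<Longrightarrow> connectedin (subtopology (cspace_top 4) (conf 4 l)) S"
        using img_conn e3 by auto
      have "Gc L s x 1 1 e3 P \<in> \<Inter>?F"
      proof -
        have "\<And>e1 e2. Gc L s x 1 1 e3 P = Gc L s x e1 e2 e3 P"
          using Gc_deg12[OF pos(1,2) PP(3,4)] by metis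
        then show ?thesis using PP(1) by auto
      qed
      then show "\<Inter>?F \<noteq> {}" by blast
    qed
    ultimately show ?thesis by simp
  qed
  have "CC = U 1 \<union> U (-1)" unfolding CC_def U_def by auto
  moreover have "U 1 \<inter> U (-1) \<noteq> {}"
  proof -
    have "Gc L s x 1 1 1 P' \<in> U 1" unfolding U_def using PP(2) by auto
    moreover have "Gc L s x 1 1 (-1) P' \<in> U (-1)" unfolding U_def using PP(2) by auto
    moreover have "Gc L s x 1 1 (-1) P' = Gc L s x 1 1 1 P'"
      using Gc_deg13[OF pos(3,4) PP(5,6)] by metis
    ultimately show ?thesis by auto
  qed
  ultimately show ?thesis using Uc by (simp add: connectedin_Un)
qed

lemma CC_props: "CC \<noteq> {}" "CC \<subseteq> {p \<in> conf 4 l. cmod (p 1 - p 5) = x}"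
  "\<And>p. p \<in> conf 4 l \<Longrightarrow> cmod (p 1 - p 5) = x \<Longrightarrow> \<exists>q\<in>CC. (p, q) \<in> congr_rel 4 l"
proof -
  obtain P P' where "P \<in> DD L s x" using pts by blast
  then show "CC \<noteq> {}" unfolding CC_def by auto
  show "CC \<subseteq> {p \<in> conf 4 l. cmod (p 1 - p 5) = x}" unfolding CC_def using G_conf by auto
  fix p assume "p \<in> conf 4 l" "cmod (p 1 - p 5) = x"
  then obtain e1 e2 e3 z where "(e1 = 1 \<or> e1 = -1)" "(e2 = 1 \<or> e2 = -1)" "(e3 = 1 \<or> e3 = -1)"
     "z \<in> DD L s x" "(p, Gc L s x e1 e2 e3 z) \<in> congr_rel 4 l" using G_surj by blast
  then show "\<exists>q\<in>CC. (p, q) \<in> congr_rel 4 l" unfolding CC_def by blast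
qed

end

lemma edge_bounds:
  assumes p: "p \<in> conf 4 l" and "l 1 = L" "l 2 = s" "l 3 = s" "l 4 = s"
  shows "L - 3 * s \<le> cmod (p 1 - p 5)" "cmod (p 1 - p 5) \<le> L + 3 * s"
proof -
  have E: "cmod (p 1 - p 2) = L" "cmod (p 2 - p 3) = s" "cmod (p 3 - p 4) = s" "cmod (p 4 - p 5) = s"
    using p unfolding conf4 using assms by auto
  have a1: "cmod (p 1 - p 5) \<le> cmod (p 1 - p 2) + cmod (p 2 - p 5)" by (rule tri3)
  have a2: "cmod (p 2 - p 5) \<le> cmod (p 2 - p 3) + cmod (p 3 - p 5)" by (rule tri3)
  have a3: "cmod (p 3 - p 5) \<le> cmod (p 3 - p 4) + cmod (p 4 - p 5)" by (rule tri3)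
  show "cmod (p 1 - p 5) \<le> L + 3 * s" using a1 a2 a3 E by linarith
  have b1: "cmod (p 1 - p 2) \<le> cmod (p 1 - p 5) + cmod (p 5 - p 2)" by (rule tri3)
  have b2: "cmod (p 5 - p 2) \<le> cmod (p 5 - p 4) + cmod (p 4 - p 2)" by (rule tri3)
  have b3: "cmod (p 4 - p 2) \<le> cmod (p 4 - p 3) + cmod (p 3 - p 2)" by (rule tri3)
  have "cmod (p 5 - p 4) = s" "cmod (p 4 - p 3) = s" "cmod (p 3 - p 2) = s"
    using E by (simp_all add: norm_minus_commute)
  then show "L - 3 * s \<le> cmod (p 1 - p 5)" using b1 b2 b3 E by linarith
qed

lemma fiber_set:
  fixes a b x :: real and l :: "nat \<Rightarrow> real"
  assumes "0 \<le> a" "a \<le> b"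
    and l: "l 1 = (a + b) / 2" "l 2 = (b - a) / 6" "l 3 = (b - a) / 6" "l 4 = (b - a) / 6"
    and x: "a \<le> x" "x \<le> b"
  shows "\<exists>C. C \<noteq> {} \<and> connectedin (subtopology (cspace_top 4) (conf 4 l)) C \<and>
     C \<subseteq> {p \<in> conf 4 l. cmod (p 1 - p 5) = x} \<and>
     (\<forall>p\<in>conf 4 l. cmod (p 1 - p 5) = x \<longrightarrow> (\<exists>q\<in>C. (p, q) \<in> congr_rel 4 l))"
proof (cases "b = 0")
  case False
  define L where "L = (a + b) / 2"
  define s where "s = (b - a) / 6"
  have e1: "L - 3 * s = a" "L + 3 * s = b" unfolding L_def s_def by (simp_all add: field_simps)
  have b0: "b > 0" using assms False by auto
  have h1: "s \<ge> 0" "3 * s \<le> L" "L > 0" using assms b0 unfolding L_def s_def by (simp_all add: field_simps)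
  have h2: "L - 3 * s \<le> x" "x \<le> L + 3 * s" using e1 x by simp_all
  have h3: "l 1 = L" "l 2 = s" "l 3 = s" "l 4 = s" using l unfolding L_def s_def by simp_all
  note h = h1 h2 h3
  show ?thesis
    using CC_conn[OF h] CC_props[OF h] by blast
next
  case True
  then have ab: "a = 0" "b = 0" "x = 0" using assms by auto
  have l0: "l 1 = 0" "l 2 = 0" "l 3 = 0" "l 4 = 0" using l ab by auto
  define p0 :: "nat \<Rightarrow> complex" where "p0 = (\<lambda>i. if i \<in> {1..5} then 0 else undefined)"
  have p0c: "p0 \<in> conf 4 l" unfolding conf4 p0_def extensional_def using l0 by auto
  have p0x: "cmod (p0 1 - p0 5) = x" using ab unfolding p0_def by simp
  have "connectedin (subtopology (cspace_top 4) (conf 4 l)) {p0}"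
    using p0c conf_sub by auto
  moreover have "\<forall>p\<in>conf 4 l. cmod (p 1 - p 5) = x \<longrightarrow> (\<exists>q\<in>{p0}. (p, q) \<in> congr_rel 4 l)"
  proof (intro ballI impI)
    fix p assume p: "p \<in> conf 4 l"
    then have E: "p 1 = p 2" "p 2 = p 3" "p 3 = p 4" "p 4 = p 5" unfolding conf4 using l0 by auto
    have "(p, p0) \<in> congr_rel 4 l"
    proof (rule congrI[OF p p0c, where u = 1 and c = "- p 1"])
      fix i :: nat assume "i \<in> {1..Suc 4}"
      then have "i = 1 \<or> i = 2 \<or> i = 3 \<or> i = 4 \<or> i = 5" by (simp only: idx5)
      then show "p0 i = 1 * p i + - p 1" using E unfolding p0_def by auto
    qed simp
    then show "\<exists>q\<in>{p0}. (p, q) \<in> congr_rel 4 l" by blast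
  qed
  ultimately show ?thesis using p0c p0x by blast
qed

theorem mainTheorem13:
  fixes a b :: real and l :: "nat \<Rightarrow> real"
  assumes "0 \<le> a" "a \<le> b"
    and "l 1 = (a + b) / 2" "l 2 = (b - a) / 6" "l 3 = (b - a) / 6" "l 4 = (b - a) / 6"
  shows "reach 4 l = {a..b} \<and> nabla 4 l = {a..b}"
proof -
  have main: "x \<in> reach 4 l \<and> connectedin (moduli_top 4 l) {X \<in> moduli 4 l. theta 4 X = x}"
    if x: "a \<le> x" "x \<le> b" for x
  proof -
    obtain C where C: "C \<noteq> {}" "connectedin (subtopology (cspace_top 4) (conf 4 l)) C"
     "C \<subseteq> {p \<in> conf 4 l. cmod (p 1 - p 5) = x}"
     "\<And>p. p \<in> conf 4 l \<Longrightarrow> cmod (p 1 - p 5) = x \<Longrightarrow> \<exists>q\<in>C. (p, q) \<in> congr_rel 4 l"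
      using fiber_set[OF assms x] by blast
    have th: "theta 4 (proj 4 l p) = cmod (p 1 - p 5)" if "p \<in> conf 4 l" for p
      using theta_proj[OF that] by (simp add: numeral_eq_Suc)
    have F: "{X \<in> moduli 4 l. theta 4 X = x} = proj 4 l ` C"
    proof
      show "{X \<in> moduli 4 l. theta 4 X = x} \<subseteq> proj 4 l ` C"
      proof
        fix X assume X: "X \<in> {X \<in> moduli 4 l. theta 4 X = x}"
        then obtain p where p: "p \<in> conf 4 l" "X = proj 4 l p" using moduli_proj by blast
        then have "cmod (p 1 - p 5) = x" using X th by auto
        then obtain q where "q \<in> C" "(p, q) \<in> congr_rel 4 l" using C(4) p by blast
        then show "X \<in> proj 4 l ` C" using p proj_eq by blast
      qed
      show "proj 4 l ` C \<subseteq> {X \<in> moduli 4 l. theta 4 X = x}"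
        using C(3) proj_in th by auto
    qed
    have "connectedin (moduli_top 4 l) (proj 4 l ` C)"
      by (rule connectedin_continuous_map_image[OF proj_cont C(2)])
    moreover have "x \<in> reach 4 l"
    proof -
      obtain q where "q \<in> C" using C(1) by blast
      then have "proj 4 l q \<in> {X \<in> moduli 4 l. theta 4 X = x}" using F by blast
      then show ?thesis unfolding reach_def by force
    qed
    ultimately show ?thesis using F by simp
  qed
  have sub: "reach 4 l \<subseteq> {a..b}"
  proof
    fix y assume "y \<in> reach 4 l"
    then obtain X where X: "X \<in> moduli 4 l" "y = theta 4 X" unfolding reach_def by blast
    then obtain p where p: "p \<in> conf 4 l" "X = proj 4 l p" using moduli_proj by blast
    have "y = cmod (p 1 - p 5)" using X p theta_proj[OF p(1)] by (simp add: numeral_eq_Suc)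
    moreover have "(a + b) / 2 - 3 * ((b - a) / 6) \<le> cmod (p 1 - p 5)"
      "cmod (p 1 - p 5) \<le> (a + b) / 2 + 3 * ((b - a) / 6)"
      using edge_bounds[OF p(1) assms(3-6)] by auto
    moreover have "(a + b) / 2 - 3 * ((b - a) / 6) = a" "(a + b) / 2 + 3 * ((b - a) / 6) = b"
      by (simp_all add: field_simps)
    ultimately show "y \<in> {a..b}" by simp
  qed
  have R: "reach 4 l = {a..b}" using sub main by auto
  moreover have "nabla 4 l = {a..b}" unfolding nabla_def R using main by auto
  ultimately show ?thesis by simp
qed

end
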